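(* Let $N>1$ and let the parameter space $\Theta$ of the correlated Bernoulli random graph model be nondegenerate. Then there does not exist an unbiased estimator of the heterogeneity correlation $\varrho_H$, i.e. there is no statistic $S:\mathcal{X}\to\mathbb{R}$ with $\mathbb{E}_\theta(S)=\varrho_H(\theta)$ for all $\theta\in\Theta$.
   Context: Correlated Bernoulli random graph model: fix a positive integer $N$ and let $\mathcal{R}=\{(p_1,\dots,p_N,\varrho_1,\dots,\varrho_N): p_i,\varrho_i\in[0,1]\}$; a parameter space is any $\Theta\subseteq\mathcal{R}$. For $\theta\in\Theta$, the pairs $(X_i,Y_i)$, $i=1,\dots,N$, of $\{0,1\}$-valued random variables are independent, $X_i,Y_i$ are marginally Bernoulli$(p_i)$ with Pearson correlation $\varrho_i$ (so $\mathbb{P}(X_i=Y_i=1)=p_i^2+\varrho_ip_i(1-p_i)$, $\mathbb{P}(X_i=Y_i=0)=(1-p_i)^2+\varrho_ip_i(1-p_i)$, $\mathbb{P}(X_i=1,Y_i=0)=\mathbb{P}(X_i=0,Y_i=1)=(1-\varrho_i)p_i(1-p_i)$). Sample space $\mathcal{X}=\{(x,y):x,y\in\{0,1\}^N\}$. Let $\mathcal{R}^o=\{(p_1,\dots,p_N,0,\dots,0):p_i\in\mathbb{R}\}$; $\Theta$ is nondegenerate if $\Theta\cap\mathcal{R}^o$ has an interior point relative to $\mathcal{R}^o$. Let $\mu=\frac1N\sum_i p_i$ and $\sigma^2=\frac1N\sum_i(p_i-\mu)^2$. The heterogeneity correlation is $\varrho_H=\frac{\sigma^2}{\mu(1-\mu)}$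 when $0<\mu<1$; when $\mu\in\{0,1\}$ it is defined by an arbitrary convention with value in $[0,1]$. *)

theory Defs
  imports "HOL-Analysis.Analysis"
begin

text \<open>The index set {1..N} is a finite
  type 'n with N = CARD('n). A parameter theta = (p, rho) is a pair of vectors in
  real^'n; a sample point is a pair (x, y) of 0/1-vectors, modelled as
  functions 'n => bool (True = 1).\<close>

type_synonym 'n param = "(real^'n) \<times> (real^'n)"
type_synonym 'n sample = "('n \<Rightarrow> bool) \<times> ('n \<Rightarrow> bool)"

definition param_space :: "'n::finite param set" where
  "param_space = {(p, r). \<forall>i. 0 \<le> p$i \<and> p$i \<le> 1 \<and> 0 \<le> r$i \<and> r$i \<le> 1}"

definition Ro :: "'n::finite param set" where
  "Ro = {(p, r). r = 0}"

definition nondegenerate :: "'n::finite param set \<Rightarrow> bool" where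
  "nondegenerate \<Theta> \<longleftrightarrow>
     (\<exists>t \<in> \<Theta> \<inter> Ro. \<exists>e>0. \<forall>s \<in> Ro. dist s t < e \<longrightarrow> s \<in> \<Theta> \<inter> Ro)"

text \<open>Joint law of one pair (X_i, Y_i) with marginals Bernoulli(p) and correlation r.\<close>
definition pair_prob :: "real \<Rightarrow> real \<Rightarrow> bool \<Rightarrow> bool \<Rightarrow> real" where
  "pair_prob p r a b =
     (if a \<and> b then p^2 + r * p * (1 - p)
      else if \<not> a \<and> \<not> b then (1 - p)^2 + r * p * (1 - p)
      else (1 - r) * p * (1 - p))"

definition sample_prob :: "'n::finite param \<Rightarrow> 'n sample \<Rightarrow> real" where
  "sample_prob \<theta> z = (\<Prod>i\<in>UNIV. pair_prob (fst \<theta> $ i) (snd \<theta> $ i) (fst z i) (snd z i))"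

definition expect :: "'n::finite param \<Rightarrow> ('n sample \<Rightarrow> real) \<Rightarrow> real" where
  "expect \<theta> S = (\<Sum>z\<in>UNIV. S z * sample_prob \<theta> z)"

definition mean_p :: "'n::finite param \<Rightarrow> real" where
  "mean_p \<theta> = (\<Sum>i\<in>UNIV. fst \<theta> $ i) / real CARD('n)"

definition var_p :: "'n::finite param \<Rightarrow> real" where
  "var_p \<theta> = (\<Sum>i\<in>UNIV. (fst \<theta> $ i - mean_p \<theta>)^2) / real CARD('n)"

text \<open>Heterogeneity correlation; conv gives the (arbitrary) convention used when mu is 0 or 1.\<close>
definition rho_H :: "('n::finite param \<Rightarrow> real) \<Rightarrow> 'n param \<Rightarrow> real" where
  "rho_H conv \<theta> =
     (if 0 < mean_p \<theta> \<and> mean_p \<theta> < 1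
      then var_p \<theta> / (mean_p \<theta> * (1 - mean_p \<theta>))
      else conv \<theta>)"

end

theory Submission
  imports Defs "HOL-Computational_Algebra.Polynomial"
begin

definition is_poly :: "(real \<Rightarrow> real) \<Rightarrow> bool" where
  "is_poly f \<longleftrightarrow> (\<exists>P. \<forall>t. f t = poly P t)"

lemma is_poly_const: "is_poly (\<lambda>t. c)"
  unfolding is_poly_def by (rule exI[of _ "[:c:]"]) simp

lemma is_poly_id: "is_poly (\<lambda>t. t)"
  unfolding is_poly_def by (rule exI[of _ "[:0,1:]"]) simp

lemma is_poly_add: "is_poly f \<Longrightarrow> is_poly g \<Longrightarrow> is_poly (\<lambda>t. f t + g t)"
  unfolding is_poly_def by (metis poly_add)

lemma is_poly_diff: "is_poly f \<Longrightarrow> is_poly g \<Longrightarrow> is_poly (\<lambda>t. f t - g t)"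
  unfolding is_poly_def by (metis poly_diff)

lemma is_poly_mult: "is_poly f \<Longrightarrow> is_poly g \<Longrightarrow> is_poly (\<lambda>t. f t * g t)"
  unfolding is_poly_def by (metis poly_mult)

lemma is_poly_div: "is_poly f \<Longrightarrow> is_poly (\<lambda>t. f t / c)"
  using is_poly_mult[OF _ is_poly_const, of f "1/c"] by simp

lemma is_poly_power: "is_poly f \<Longrightarrow> is_poly (\<lambda>t. f t ^ n)"
  by (induction n) (auto intro: is_poly_mult is_poly_const)

lemma is_poly_sum: "finite A \<Longrightarrow> (\<And>k. k \<in> A \<Longrightarrow> is_poly (f k)) \<Longrightarrow> is_poly (\<lambda>t. \<Sum>k\<in>A. f k t)"
  by (induction A rule: finite_induct) (auto intro: is_poly_add is_poly_const)

lemma is_poly_prod: "finite A \<Longrightarrow> (\<And>k. k \<in> A \<Longrightarrow> is_poly (f k)) \<Longrightarrow> is_poly (\<lambda>t. \<Prod>k\<in>A. f k t)"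
  by (induction A rule: finite_induct) (auto intro: is_poly_mult is_poly_const)

lemma is_poly_pair_prob: "is_poly f \<Longrightarrow> is_poly (\<lambda>t. pair_prob (f t) r a b)"
  unfolding pair_prob_def
  by (cases a; cases b; simp; intro is_poly_add is_poly_mult is_poly_diff is_poly_power is_poly_const; assumption)

lemma is_poly_zero:
  assumes "is_poly f" "infinite A" "\<forall>t\<in>A. f t = 0"
  shows "f t = 0"
proof -
  obtain P where P: "\<And>t. f t = poly P t" using assms(1) unfolding is_poly_def by blast
  have "P = 0"
  proof (rule ccontr)
    assume "P \<noteq> 0"
    then have "finite {x. poly P x = 0}" by (rule poly_roots_finite)
    moreover have "A \<subseteq> {x. poly P x = 0}" using assms(3) P by auto
    ultimately show False using assms(2) finite_subset by blast
  qed
  then show ?thesis using P by simp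
qed

lemma mean_bounds:
  fixes x :: "real^'n::finite"
  assumes "\<forall>i. 0 \<le> x$i \<and> x$i \<le> 1" "0 < x$j" "x$j < 1"
  shows "0 < (\<Sum>i\<in>UNIV. x$i) / real CARD('n)" "(\<Sum>i\<in>UNIV. x$i) / real CARD('n) < 1"
proof -
  have c: "real CARD('n) > 0" by simp
  have s: "(\<Sum>i\<in>UNIV. x$i) = x$j + (\<Sum>i\<in>UNIV-{j}. x$i)"
    by (simp add: sum.remove)
  have "0 \<le> (\<Sum>i\<in>UNIV-{j}. x$i)" using assms(1) by (simp add: sum_nonneg)
  then show "0 < (\<Sum>i\<in>UNIV. x$i) / real CARD('n)" using s assms c by simp
  have "(\<Sum>i\<in>UNIV-{j}. x$i) \<le> (\<Sum>i\<in>UNIV-{j}. 1)" using assms(1) by (intro sum_mono) auto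
  also have "\<dots> = real CARD('n) - 1" by (simp add: card_Diff_singleton)
  finally show "(\<Sum>i\<in>UNIV. x$i) / real CARD('n) < 1" using s assms c by (simp add: field_simps)
qed

theorem theorem4:
  fixes \<Theta> :: "'n::finite param set"
    and conv :: "'n param \<Rightarrow> real"
  assumes "CARD('n) > 1"
    and "\<Theta> \<subseteq> param_space"
    and "nondegenerate \<Theta>"
    and "\<forall>\<theta>\<in>\<Theta>. 0 \<le> conv \<theta> \<and> conv \<theta> \<le> 1"
  shows "\<not> (\<exists>S :: 'n sample \<Rightarrow> real. \<forall>\<theta>\<in>\<Theta>. expect \<theta> S = rho_H conv \<theta>)"
proof
  assume "\<exists>S :: 'n sample \<Rightarrow> real. \<forall>\<theta>\<in>\<Theta>. expect \<theta> S = rho_H conv \<theta>"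
  then obtain S :: "'n sample \<Rightarrow> real" where S: "\<And>\<theta>. \<theta>\<in>\<Theta> \<Longrightarrow> expect \<theta> S = rho_H conv \<theta>" by blast
  obtain t0 e where t0: "t0 \<in> \<Theta> \<inter> Ro" and e: "e > 0"
    and ball: "\<And>s. s \<in> Ro \<Longrightarrow> dist s t0 < e \<Longrightarrow> s \<in> \<Theta> \<inter> Ro"
    using assms(3) unfolding nondegenerate_def by blast
  obtain p0 where p0: "t0 = (p0, 0)" using t0 unfolding Ro_def by auto
  obtain i1 :: 'n where True by blast
  obtain j :: 'n where j: "j \<noteq> i1"
  proof -
    have "UNIV - {i1} \<noteq> {}"
    proof
      assume "UNIV - {i1} = {}"
      then have "(UNIV::'n set) = {i1}" by auto
      then have "CARD('n) = 1" by (metis card.empty card_insert_disjoint empty_iff finite.emptyI One_nat_def)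
      then show False using assms(1) by simp
    qed
    then show ?thesis using that by blast
  qed
  define pt where "pt t = p0 + t *\<^sub>R axis i1 (1::real)" for t
  define th where "th t = (pt t, 0::real^'n)" for t
  define N where "N = real CARD('n)"
  have Npos: "N > 0" unfolding N_def by simp
  have pt_j: "pt t $ j = p0 $ j" for t using j unfolding pt_def axis_def by simp
  have pt_i1: "pt t $ i1 = p0 $ i1 + t" for t unfolding pt_def axis_def by simp
  have inTh: "th t \<in> \<Theta>" if "\<bar>t\<bar> < e" for t
  proof -
    have "th t \<in> Ro" unfolding th_def Ro_def by simp
    moreover have "dist (th t) t0 = \<bar>t\<bar>"
      unfolding th_def p0 pt_def by (simp add: dist_Pair_Pair dist_norm)
    ultimately show ?thesis using ball[of "th t"] that by simp
  qed
  have inPS: "\<forall>i. 0 \<le> pt t $ i \<and> pt t $ i \<le> 1" if "\<bar>t\<bar> < e" for t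
    using inTh[OF that] assms(2) unfolding param_space_def th_def by auto
  have mean: "mean_p (th t) = (\<Sum>i\<in>UNIV. p0$i) / N + t / N" for t
  proof -
    have "(\<Sum>i\<in>UNIV. pt t $ i) = (\<Sum>i\<in>UNIV. p0$i) + t"
      unfolding pt_def axis_def by (simp add: sum.distrib if_distrib[of "(*) t"] cong: if_cong)
    then show ?thesis unfolding mean_p_def th_def N_def by (simp add: add_divide_distrib)
  qed
  define A where "A = {0<..<e/2}"
  have infA: "infinite A" unfolding A_def using e by (simp add: infinite_Ioo)
  have strict: "0 < pt t $ i1 \<and> pt t $ i1 < 1" if "\<bar>t\<bar> < e/2" for t
  proof -
    have "\<bar>t + e/4\<bar> < e" "\<bar>t - e/4\<bar> < e" using that e by auto
    from spec[OF inPS[OF this(1)], of i1] spec[OF inPS[OF this(2)], of i1]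
    have "p0 $ i1 + (t + e/4) \<le> 1" "0 \<le> p0 $ i1 + (t - e/4)"
      unfolding pt_i1 by simp_all
    then show ?thesis using e unfolding pt_i1 by auto
  qed
  define g where "g t = expect (th t) S * (mean_p (th t) * (1 - mean_p (th t))) - var_p (th t)" for t
  have gpoly: "is_poly g"
  proof -
    have ptp: "is_poly (\<lambda>t. pt t $ i)" for i
    proof -
      have "pt t $ i = p0$i + t * (if i = i1 then 1 else 0)" for t unfolding pt_def axis_def by simp
      then show ?thesis by (simp only:) (intro is_poly_add is_poly_mult is_poly_const is_poly_id)
    qed
    have mp: "is_poly (\<lambda>t. mean_p (th t))"
      unfolding mean_p_def th_def by (simp; intro is_poly_div is_poly_sum ptp; simp)
    have ep: "is_poly (\<lambda>t. expect (th t) S)"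
      unfolding expect_def sample_prob_def th_def
      by (simp; intro is_poly_sum is_poly_mult is_poly_const is_poly_prod is_poly_pair_prob ptp; simp)
    have vp: "is_poly (\<lambda>t. var_p (th t))"
      unfolding var_p_def
      by (intro is_poly_div is_poly_sum is_poly_power is_poly_diff mp; simp add: th_def ptp)
    show ?thesis unfolding g_def by (intro is_poly_diff is_poly_mult ep mp vp is_poly_const)
  qed
  have gA: "\<forall>t\<in>A. g t = 0"
  proof
    fix t assume "t \<in> A"
    then have t: "\<bar>t\<bar> < e/2" "\<bar>t\<bar> < e" unfolding A_def by auto
    have mb: "0 < mean_p (th t)" "mean_p (th t) < 1"
      using mean_bounds[OF inPS[OF t(2)], of i1] strict[OF t(1)]
      unfolding mean_p_def th_def by auto
    have "expect (th t) S = var_p (th t) / (mean_p (th t) * (1 - mean_p (th t)))"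
      using S[OF inTh[OF t(2)]] mb unfolding rho_H_def by simp
    then show "g t = 0" unfolding g_def using mb by simp
  qed
  have g0: "g t = 0" for t by (rule is_poly_zero[OF gpoly infA gA])
  have var0: "pt t $ j = c" if "mean_p (th t) = c" "c = 0 \<or> c = 1" for t c
  proof -
    have "var_p (th t) = 0" using g0[of t] that unfolding g_def by auto
    then have "(\<Sum>i\<in>UNIV. (pt t $ i - c)^2) = 0"
      using that(1) unfolding var_p_def th_def by simp
    then have "\<forall>i\<in>UNIV. (pt t $ i - c)^2 = 0" by (subst (asm) sum_nonneg_eq_0_iff) auto
    then show ?thesis by simp
  qed
  define m0 where "m0 = (\<Sum>i\<in>UNIV. p0$i) / N"
  have "mean_p (th (- N * m0)) = 0" unfolding mean m0_def using Npos by simp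
  then have a: "p0 $ j = 0" using var0[of "- N * m0" 0] pt_j by simp
  have "mean_p (th (N * (1 - m0))) = 1" unfolding mean m0_def using Npos by (simp add: field_simps)
  then have b: "p0 $ j = 1" using var0[of "N * (1 - m0)" 1] pt_j by simp
  from a b show False by simp
qed

end
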